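(* Let the system's knowledge connectivity graph $G_{di}$ belong to $\mathcal{G}_{di}$, and let $V_{sink}$ be the set of sink members of $G_{di}$. If every correct process executes the Discovery algorithm, then every correct process $i$ eventually (a) discovers all sink members, i.e. $V_{sink}\cap C\subseteq \mathcal{S}_{known}$ at $i$ (the paper's proof in fact shows $V_{sink}\subseteq\mathcal{S}_{known}$), and (b) receives the participant detectors of all correct sink members, i.e. $V_{sink}\cap C\subseteq \mathcal{S}_{received}$ at $i$.
   Context: System model: a finite set $\Pi$ of processes with unique IDs (no Sybil attacks), partially synchronous: for every execution there exist an unknown time GST and a bound $\delta$ such that after GST every message between correct processes is delivered within $\delta$. A static set $F\subset\Pi$ of processes is Byzantine (arbitrary behavior, may collude); $C=\Pi\setminus F$ are the correct processes, and $|F|\le f$ for a fault threshold $f$. Channels are reliable and authenticated point-to-point, and processes can use unforgeable digital signatures; $\langle m\rangle_i$ denotes $m$ signed by $i$. Each process $i$ has a participant detector $PD_i\subseteq\Pi$ (the processes it initially knows); $i$ may send a message to $j$ only if $j$ is in $i$'s current set of known processes. The knowledge connectivity graph is the digraph $G_{di}=(\Pi,E_{di})$ with $(i,j)\in E_{di}$ iff $j\in PD_i$. Graph notions: a digraph is $k$-strongly connected if every ordered pair of distinct vertices is joined by $k$ internally node-disjoint directed paths; $\kappa(H)$ is the largest such $k$. A strongly connected component is a sink if no edge leaves it. A digraph belongs to $k$-OSR PD if (i) its underlying undirected graph is connected, (ii) its condensation (DAG of strongly connected components) has exactly one sink component $G_{sink}=(V_{sink},E_{sink})$, (iii) $G_{sink}$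 is $k$-strongly connected, and (iv) every vertex outside $V_{sink}$ has at least $k$ node-disjoint paths to every vertex of $V_{sink}$. The safe subgraph $G_{safe}$ is the subgraph of $G_{di}$ induced on $\Pi\setminus F$. $\mathcal{G}_{di}$ is the family of finite knowledge connectivity graphs whose safe subgraph belongs to $(f+1)$-OSR PD and whose safe sink component has at least $2f+1$ processes. The sink members of $G_{di}$ are the processes of the sink component of $G_{safe}$ together with the Byzantine processes belonging (in $G_{di}$) to the strongly connected component containing it. Discovery algorithm at process $i$: initialize $\mathcal{S}_{PD}=\{\langle i,PD_i\rangle_i\}$, $\mathcal{S}_{known}=PD_i\cup\{i\}$, $\mathcal{S}_{received}=\{i\}$. Periodically send $\langle\textsc{GetPDs}\rangle$ to every $j\in\mathcal{S}_{known}$. On receiving $\langle\textsc{GetPDs}\rangle$ from $j$, reply $\langle\textsc{SetPDs},\mathcal{S}_{PD}\rangle$. On receiving $\langle\textsc{SetPDs},pds_j\rangle$ from $j$: if $pds_j$ contains $\langle j,PD_j\rangle_j$ correctly signed by $j$, set $\mathcal{S}_{PD}\leftarrow\mathcal{S}_{PD}\cup pds_j$, add to $\mathcal{S}_{known}$ every process appearing in some signed PD in $pds_j$, and add to $\mathcal{S}_{received}$ every $k$ such that a PD signed by $k$ is in $pds_j$. *)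

theory Defs
  imports Main
begin

text \<open>A digraph is given by a vertex set V and an edge relation E (only edges
inside V are used).\<close>

definition dpath :: "'a set \<Rightarrow> ('a \<times> 'a) set \<Rightarrow> 'a \<Rightarrow> 'a \<Rightarrow> 'a list \<Rightarrow> bool" where
  "dpath V E u v p \<longleftrightarrow> p \<noteq> [] \<and> hd p = u \<and> last p = v \<and> distinct p \<and> set p \<subseteq> V \<and>
     (\<forall>n. Suc n < length p \<longrightarrow> (p ! n, p ! Suc n) \<in> E)"

definition interior :: "'a list \<Rightarrow> 'a set" where
  "interior p = set (butlast (tl p))"

definition k_disjoint_paths :: "nat \<Rightarrow> 'a set \<Rightarrow> ('a \<times> 'a) set \<Rightarrow> 'a \<Rightarrow> 'a \<Rightarrow> bool" where
  "k_disjoint_paths k V E u v \<longleftrightarrow>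
     (\<exists>P. finite P \<and> card P = k \<and> (\<forall>p\<in>P. dpath V E u v p) \<and>
          (\<forall>p\<in>P. \<forall>q\<in>P. p \<noteq> q \<longrightarrow> interior p \<inter> interior q = {}))"

definition k_strongly_connected :: "nat \<Rightarrow> 'a set \<Rightarrow> ('a \<times> 'a) set \<Rightarrow> bool" where
  "k_strongly_connected k V E \<longleftrightarrow>
     (\<forall>u\<in>V. \<forall>v\<in>V. u \<noteq> v \<longrightarrow> k_disjoint_paths k V E u v)"

definition reach :: "'a set \<Rightarrow> ('a \<times> 'a) set \<Rightarrow> 'a \<Rightarrow> 'a \<Rightarrow> bool" where
  "reach V E u v \<longleftrightarrow> (u, v) \<in> (E \<inter> V \<times> V)\<^sup>*"

definition scc_of :: "'a set \<Rightarrow> ('a \<times> 'a) set \<Rightarrow> 'a \<Rightarrow> 'a set" where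
  "scc_of V E x = {y \<in> V. reach V E x y \<and> reach V E y x}"

definition is_scc :: "'a set \<Rightarrow> ('a \<times> 'a) set \<Rightarrow> 'a set \<Rightarrow> bool" where
  "is_scc V E S \<longleftrightarrow> (\<exists>x\<in>V. S = scc_of V E x)"

definition is_sink_scc :: "'a set \<Rightarrow> ('a \<times> 'a) set \<Rightarrow> 'a set \<Rightarrow> bool" where
  "is_sink_scc V E S \<longleftrightarrow> is_scc V E S \<and> (\<forall>x\<in>S. \<forall>y\<in>V. (x, y) \<in> E \<longrightarrow> y \<in> S)"

definition weakly_connected :: "'a set \<Rightarrow> ('a \<times> 'a) set \<Rightarrow> bool" where
  "weakly_connected V E \<longleftrightarrow>
     (\<forall>u\<in>V. \<forall>v\<in>V. (u, v) \<in> ((E \<union> E\<inverse>) \<inter> V \<times> V)\<^sup>*)"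

text \<open>The (unique, when it exists) sink component.\<close>
definition sink_component :: "'a set \<Rightarrow> ('a \<times> 'a) set \<Rightarrow> 'a set" where
  "sink_component V E = (THE S. is_sink_scc V E S)"

definition k_OSR :: "nat \<Rightarrow> 'a set \<Rightarrow> ('a \<times> 'a) set \<Rightarrow> bool" where
  "k_OSR k V E \<longleftrightarrow>
     weakly_connected V E \<and>
     (\<exists>!S. is_sink_scc V E S) \<and>
     k_strongly_connected k (sink_component V E) (E \<inter> sink_component V E \<times> sink_component V E) \<and>
     (\<forall>u\<in>V - sink_component V E. \<forall>v\<in>sink_component V E. k_disjoint_paths k V E u v)"

text \<open>Processes are the elements of the finite type 'p (so \<Pi> = UNIV).
PD i is the participant detector of i; F is the set of Byzantine processes.\<close>

definition Edi :: "('p \<Rightarrow> 'p set) \<Rightarrow> ('p \<times> 'p) set" where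
  "Edi PD = {(i, j). j \<in> PD i}"

definition correct :: "'p set \<Rightarrow> 'p set" where
  "correct F = UNIV - F"

definition Esafe :: "('p \<Rightarrow> 'p set) \<Rightarrow> 'p set \<Rightarrow> ('p \<times> 'p) set" where
  "Esafe PD F = Edi PD \<inter> correct F \<times> correct F"

definition safe_sink :: "('p \<Rightarrow> 'p set) \<Rightarrow> 'p set \<Rightarrow> 'p set" where
  "safe_sink PD F = sink_component (correct F) (Esafe PD F)"

definition in_Gdi :: "nat \<Rightarrow> ('p::finite \<Rightarrow> 'p set) \<Rightarrow> 'p set \<Rightarrow> bool" where
  "in_Gdi f PD F \<longleftrightarrow>
     k_OSR (f + 1) (correct F) (Esafe PD F) \<and> card (safe_sink PD F) \<ge> 2 * f + 1"

definition sink_members :: "('p \<Rightarrow> 'p set) \<Rightarrow> 'p set \<Rightarrow> 'p set" where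
  "sink_members PD F =
     safe_sink PD F \<union>
     {b \<in> F. \<exists>c\<in>safe_sink PD F. b \<in> scc_of UNIV (Edi PD) c}"

text \<open>A signed participant detector \<langle>k, S\<rangle>_k is represented by the pair (k, S);
unforgeability of signatures is expressed by the constraint that an entry
(k, S) with k correct always has S = PD k (a correct process only ever signs
its own PD).

For each process i and time t:
  SPD i t, Sknown i t, Srec i t are the local variables S_PD, S_known, S_received
  (meaningful for correct i);
  deliv i j t is the set of payloads pds_j of SetPDs messages from j delivered
  to i at time t.\<close>

definition valid_setpds :: "'p \<Rightarrow> ('p \<times> 'p set) set \<Rightarrow> bool" where
  "valid_setpds j pds \<longleftrightarrow> (\<exists>S. (j, S) \<in> pds)"

definition discovery_execution ::
  "('p \<Rightarrow> 'p set) \<Rightarrow> 'p set \<Rightarrow>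
   ('p \<Rightarrow> nat \<Rightarrow> ('p \<times> 'p set) set) \<Rightarrow> ('p \<Rightarrow> nat \<Rightarrow> 'p set) \<Rightarrow> ('p \<Rightarrow> nat \<Rightarrow> 'p set) \<Rightarrow>
   ('p \<Rightarrow> 'p \<Rightarrow> nat \<Rightarrow> ('p \<times> 'p set) set set) \<Rightarrow> bool" where
  "discovery_execution PD F SPD Sknown Srec deliv \<longleftrightarrow>
    (\<forall>i\<in>correct F.
      \<comment> \<open>initialisation\<close>
      SPD i 0 = {(i, PD i)} \<and> Sknown i 0 = PD i \<union> {i} \<and> Srec i 0 = {i} \<and>
      \<comment> \<open>handling of the SetPDs messages delivered at time t\<close>
      (\<forall>t. SPD i (Suc t) = SPD i t \<union>
              \<Union>{pds. \<exists>j. pds \<in> deliv i j t \<and> valid_setpds j pds} \<and>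
           Sknown i (Suc t) = Sknown i t \<union>
              {x. \<exists>j pds k S. pds \<in> deliv i j t \<and> valid_setpds j pds \<and>
                              (k, S) \<in> pds \<and> (x = k \<or> x \<in> S)} \<and>
           Srec i (Suc t) = Srec i t \<union>
              {k. \<exists>j pds S. pds \<in> deliv i j t \<and> valid_setpds j pds \<and> (k, S) \<in> pds}) \<and>
      \<comment> \<open>a correct sender replies with its current S_PD (sent no later than delivery)\<close>
      (\<forall>j\<in>correct F. \<forall>t pds. pds \<in> deliv i j t \<longrightarrow> (\<exists>t'\<le>t. pds = SPD j t')) \<and>
      \<comment> \<open>Byzantine senders cannot forge signatures of correct processes\<close>
      (\<forall>j\<in>F. \<forall>t pds k S. pds \<in> deliv i j t \<longrightarrow> (k, S) \<in> pds \<longrightarrow> k \<in> correct F \<longrightarrow> S = PD k) \<and>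
      \<comment> \<open>liveness: i keeps sending GetPDs to every known process j; a correct j
          answers (with its S_PD at the time it receives the request) and the
          answer is eventually delivered (reliable channels, partial synchrony)\<close>
      (\<forall>j\<in>correct F. \<forall>t. j \<in> Sknown i t \<longrightarrow>
          (\<exists>t1 t2. t \<le> t1 \<and> t1 \<le> t2 \<and> SPD j t1 \<in> deliv i j t2)))"

end

theory Submission
  imports Defs
begin

lemma de:
  assumes "discovery_execution PD F SPD Sknown Srec deliv" "i \<in> correct F"
  shows de_init: "SPD i 0 = {(i, PD i)}" "Sknown i 0 = PD i \<union> {i}" "Srec i 0 = {i}"
    and de_spd: "SPD i (Suc t) = SPD i t \<union>
              \<Union>{pds. \<exists>j. pds \<in> deliv i j t \<and> valid_setpds j pds}"
    and de_kn: "Sknown i (Suc t) = Sknown i t \<union>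
              {x. \<exists>j pds k S. pds \<in> deliv i j t \<and> valid_setpds j pds \<and>
                              (k, S) \<in> pds \<and> (x = k \<or> x \<in> S)}"
    and de_rec: "Srec i (Suc t) = Srec i t \<union>
              {k. \<exists>j pds S. pds \<in> deliv i j t \<and> valid_setpds j pds \<and> (k, S) \<in> pds}"
    and de_live: "\<And>j t. j \<in> correct F \<Longrightarrow> j \<in> Sknown i t \<Longrightarrow>
          (\<exists>t1 t2. t \<le> t1 \<and> t1 \<le> t2 \<and> SPD j t1 \<in> deliv i j t2)"
  using assms unfolding discovery_execution_def by auto

lemma mono_sets:
  assumes "discovery_execution PD F SPD Sknown Srec deliv" "i \<in> correct F" "t \<le> t'"
  shows "SPD i t \<subseteq> SPD i t'" "Sknown i t \<subseteq> Sknown i t'" "Srec i t \<subseteq> Srec i t'"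
proof -
  have h1: "\<And>n. SPD i n \<subseteq> SPD i (Suc n)"
    by (subst de_spd[OF assms(1,2)]) (rule Un_upper1)
  have h2: "\<And>n. Sknown i n \<subseteq> Sknown i (Suc n)"
    by (subst de_kn[OF assms(1,2)]) (rule Un_upper1)
  have h3: "\<And>n. Srec i n \<subseteq> Srec i (Suc n)"
    by (subst de_rec[OF assms(1,2)]) (rule Un_upper1)
  show "SPD i t \<subseteq> SPD i t'" by (rule lift_Suc_mono_le[of "SPD i", OF h1 assms(3)])
  show "Sknown i t \<subseteq> Sknown i t'" by (rule lift_Suc_mono_le[of "Sknown i", OF h2 assms(3)])
  show "Srec i t \<subseteq> Srec i t'" by (rule lift_Suc_mono_le[of "Srec i", OF h3 assms(3)])
qed

lemma step_known:
  assumes ex: "discovery_execution PD F SPD Sknown Srec deliv" and i: "i \<in> correct F"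
    and j: "j \<in> correct F" and jk: "j \<in> Sknown i t"
  shows "\<exists>t2\<ge>t. PD j \<subseteq> Sknown i (Suc t2) \<and> j \<in> Srec i (Suc t2)"
proof -
  obtain t1 t2 where t: "t \<le> t1" "t1 \<le> t2" "SPD j t1 \<in> deliv i j t2"
    using de_live[OF ex i j jk] by blast
  have "SPD j 0 = {(j, PD j)}" using de_init[OF ex j] by blast
  moreover have "SPD j 0 \<subseteq> SPD j t1" using mono_sets[OF ex j] by simp
  ultimately have m: "(j, PD j) \<in> SPD j t1" by auto
  hence v: "valid_setpds j (SPD j t1)" unfolding valid_setpds_def by blast
  have eqs: "Sknown i (Suc t2) = Sknown i t2 \<union>
              {x. \<exists>j pds k S. pds \<in> deliv i j t2 \<and> valid_setpds j pds \<and>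
                              (k, S) \<in> pds \<and> (x = k \<or> x \<in> S)}"
     "Srec i (Suc t2) = Srec i t2 \<union>
              {k. \<exists>j pds S. pds \<in> deliv i j t2 \<and> valid_setpds j pds \<and> (k, S) \<in> pds}"
    using de_kn[OF ex i] de_rec[OF ex i] by blast+
  have "PD j \<subseteq> Sknown i (Suc t2)" unfolding eqs(1) using t(3) v m by blast
  moreover have "j \<in> Srec i (Suc t2)" unfolding eqs(2) using t(3) v m by blast
  ultimately show ?thesis using t by (intro exI[of _ t2]) auto
qed

lemma reach_eventually:
  assumes ex: "discovery_execution PD F SPD Sknown Srec deliv" and i: "i \<in> correct F"
    and r: "(i, v) \<in> (Esafe PD F \<inter> correct F \<times> correct F)\<^sup>*"
  shows "\<exists>T. \<forall>t\<ge>T. v \<in> Sknown i t"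
  using r
proof (induction rule: rtrancl_induct)
  case base
  have "i \<in> Sknown i 0" using de_init[OF ex i] by blast
  then show ?case using mono_sets[OF ex i] by blast
next
  case (step y z)
  then obtain T where T: "\<forall>t\<ge>T. y \<in> Sknown i t" by blast
  have yc: "y \<in> correct F" and yz: "z \<in> PD y" using step(2) unfolding Esafe_def Edi_def by auto
  obtain t2 where "PD y \<subseteq> Sknown i (Suc t2)" using step_known[OF ex i yc] T by blast
  then show ?case using yz mono_sets[OF ex i] by blast
qed

theorem theorem2:
  fixes f :: nat
    and PD :: "'p::finite \<Rightarrow> 'p set"
    and F :: "'p set"
    and SPD :: "'p \<Rightarrow> nat \<Rightarrow> ('p \<times> 'p set) set"
    and Sknown Srec :: "'p \<Rightarrow> nat \<Rightarrow> 'p set"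
    and deliv :: "'p \<Rightarrow> 'p \<Rightarrow> nat \<Rightarrow> ('p \<times> 'p set) set set"
  assumes "card F \<le> f"
    and "in_Gdi f PD F"
    and "discovery_execution PD F SPD Sknown Srec deliv"
    and "i \<in> correct F"
  shows "\<exists>T. \<forall>t\<ge>T. sink_members PD F \<inter> correct F \<subseteq> Sknown i t \<and>
                    sink_members PD F \<inter> correct F \<subseteq> Srec i t"
proof -
  note ex = assms(3) and ic = assms(4)
  define V where "V = correct F"
  define E where "E = Esafe PD F"
  define S where "S = safe_sink PD F"
  have osr: "k_OSR (f + 1) V E" using assms(2) unfolding in_Gdi_def V_def E_def by blast
  have uniq: "\<exists>!S. is_sink_scc V E S" using osr unfolding k_OSR_def by blast
  have Ssink: "is_sink_scc V E S"
    unfolding S_def safe_sink_def sink_component_def V_def[symmetric] E_def[symmetric]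
    using theI'[OF uniq] .
  then obtain x where x: "x \<in> V" "S = scc_of V E x" unfolding is_sink_scc_def is_scc_def by blast
  have SV: "S \<subseteq> V" using x unfolding scc_of_def by auto
  have sc: "S = sink_component V E" unfolding S_def safe_sink_def V_def E_def by simp
  have reachS: "\<forall>v\<in>S. reach V E i v"
  proof
    fix v assume v: "v \<in> S"
    show "reach V E i v"
    proof (cases "i \<in> S")
      case True
      then have "reach V E i x" "reach V E x v" using v x unfolding scc_of_def by auto
      then show ?thesis unfolding reach_def by auto
    next
      case False
      have iV: "i \<in> V" using ic V_def by simp
      have "k_disjoint_paths (f+1) V E i v" using osr False iV v unfolding k_OSR_def sc by blast
      then obtain P where P: "finite P" "card P = f + 1" "\<forall>p\<in>P. dpath V E i v p"
        unfolding k_disjoint_paths_def by blast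
      then have "P \<noteq> {}" by auto
      then obtain p where "dpath V E i v p" using P by blast
      then have d: "p \<noteq> []" "hd p = i" "last p = v" "set p \<subseteq> V"
        "\<forall>n. Suc n < length p \<longrightarrow> (p ! n, p ! Suc n) \<in> E"
        unfolding dpath_def by auto
      have "\<forall>n < length p. (hd p, p ! n) \<in> (E \<inter> V \<times> V)\<^sup>*"
      proof (intro allI impI)
        fix n assume "n < length p"
        then show "(hd p, p ! n) \<in> (E \<inter> V \<times> V)\<^sup>*"
        proof (induction n)
          case 0 then show ?case using d(1) by (simp add: hd_conv_nth)
        next
          case (Suc n)
          then have "(p ! n, p ! Suc n) \<in> E \<inter> V \<times> V" using d(4,5) nth_mem
            by (metis IntI Suc_lessD mem_Sigma_iff subsetD)
          then show ?case using Suc by (meson Suc_lessD rtrancl.rtrancl_into_rtrancl)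
        qed
      qed
      then have "(hd p, p ! (length p - 1)) \<in> (E \<inter> V \<times> V)\<^sup>*" using d(1) by simp
      then show ?thesis using d unfolding reach_def by (simp add: last_conv_nth)
    qed
  qed
  have each: "\<forall>v\<in>S. \<exists>T. \<forall>t\<ge>T. v \<in> Sknown i t \<and> v \<in> Srec i t"
  proof
    fix v assume v: "v \<in> S"
    then have "(i, v) \<in> (Esafe PD F \<inter> correct F \<times> correct F)\<^sup>*"
      using reachS unfolding reach_def V_def E_def by auto
    then obtain T where T: "\<forall>t\<ge>T. v \<in> Sknown i t" using reach_eventually[OF ex ic] by blast
    have vc: "v \<in> correct F" using v SV V_def by auto
    obtain t2 where t2: "t2 \<ge> T" "v \<in> Srec i (Suc t2)" using step_known[OF ex ic vc] T by blast
    show "\<exists>T. \<forall>t\<ge>T. v \<in> Sknown i t \<and> v \<in> Srec i t"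
      using T t2 mono_sets(3)[OF ex ic, of "Suc t2"] by (intro exI[of _ "Suc t2"]) auto
  qed
  then obtain g where g: "\<forall>v\<in>S. \<forall>t\<ge>g v. v \<in> Sknown i t \<and> v \<in> Srec i t" by metis
  have fin: "finite S" by simp
  have sm: "sink_members PD F \<inter> correct F \<subseteq> S"
    unfolding sink_members_def S_def correct_def by auto
  show ?thesis
  proof (intro exI[of _ "\<Sum>v\<in>S. g v"] allI impI)
    fix t assume t: "(\<Sum>v\<in>S. g v) \<le> t"
    have "\<forall>v\<in>S. v \<in> Sknown i t \<and> v \<in> Srec i t"
    proof
      fix v assume v: "v \<in> S"
      have "g v \<le> (\<Sum>v\<in>S. g v)" using member_le_sum[OF v, of g] fin by simp
      then show "v \<in> Sknown i t \<and> v \<in> Srec i t" using g v t by auto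
    qed
    then show "sink_members PD F \<inter> correct F \<subseteq> Sknown i t \<and>
                    sink_members PD F \<inter> correct F \<subseteq> Srec i t" using sm by blast
  qed
qed

end
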